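(* Let $R$ be a commutative Noetherian ring with non-zero identity. Let $\mathcal{P} \subset R$ be a finite subset and $I = (\mathcal{P})$. Let $\mathcal{P}_0, \mathcal{P}_1, \ldots, \mathcal{P}_r$ be subsets of $\mathcal{P}$ satisfying: (B1) $\mathcal{P} = \mathcal{P}_0 \cup \mathcal{P}_1 \cup \cdots \cup \mathcal{P}_r$; (B2) $\mathcal{P}_0$ has exactly one element; (B3) for each $\ell$ with $0 < \ell \le r$ and every $a, a'' \in \mathcal{P}_\ell$ with $a \ne a''$, there exists an integer $m \ge 1$ such that $(a a'')^m \in (\mathcal{P}_0 \cup \cdots \cup \mathcal{P}_{\ell-1}) I^{2m-1}$, where $(\mathcal{P}_0 \cup \cdots \cup \mathcal{P}_{\ell-1})$ denotes the ideal generated by this set. Set $g_\ell = \sum_{a \in \mathcal{P}_\ell} a$ for $\ell = 0, 1, \ldots, r$. Then $J = (g_0, g_1, \ldots, g_r)$ is a reduction of $I$.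
   Context: An ideal $J \subseteq I$ is called a reduction of $I$ if there exists an integer $s \ge 1$ such that $I^{s+1} = J I^s$. *)

theory Defs
  imports "HOL-Algebra.Ideal_Product" "HOL-Algebra.Ring_Divisibility"
begin

definition ideal_pow :: "('a, 'b) ring_scheme \<Rightarrow> 'a set \<Rightarrow> nat \<Rightarrow> 'a set" where
  "ideal_pow R I n = ((\<lambda>X. ideal_prod R I X) ^^ n) (carrier R)"

definition is_reduction :: "('a, 'b) ring_scheme \<Rightarrow> 'a set \<Rightarrow> 'a set \<Rightarrow> bool" where
  "is_reduction R J I \<longleftrightarrow> ideal J R \<and> J \<subseteq> I \<and>
     (\<exists>s::nat. s \<ge> 1 \<and> ideal_pow R I (Suc s) = ideal_prod R J (ideal_pow R I s))"

end

theory Submission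
  imports Defs
begin

context cring
begin

lemma pw0[simp]: "ideal_pow R X 0 = carrier R" by (simp add: ideal_pow_def)
lemma pwS: "ideal_pow R X (Suc n) = X \<cdot> ideal_pow R X n" by (simp add: ideal_pow_def)

lemma pw_ideal: "ideal X R \<Longrightarrow> ideal (ideal_pow R X n) R"
  by (induct n) (simp_all add: pwS oneideal ideal_prod_is_ideal)

lemma prod_mono: "X \<subseteq> X' \<Longrightarrow> Y \<subseteq> Y' \<Longrightarrow> X \<cdot> Y \<subseteq> X' \<cdot> Y'"
proof
  fix s assume h: "X \<subseteq> X'" "Y \<subseteq> Y'" and s: "s \<in> X \<cdot> Y"
  from s show "s \<in> X' \<cdot> Y'"
    by (induct s rule: ideal_prod.induct) (use h in \<open>auto intro: ideal_prod.prod ideal_prod.sum\<close>)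
qed

lemma prod_subset:
  assumes C: "ideal C R" and h: "\<And>x y. x \<in> X \<Longrightarrow> y \<in> Y \<Longrightarrow> x \<otimes> y \<in> C"
  shows "X \<cdot> Y \<subseteq> C"
proof
  fix s assume "s \<in> X \<cdot> Y"
  thus "s \<in> C"
    by (induct s rule: ideal_prod.induct)
       (auto simp: h intro: additive_subgroup.a_closed[OF ideal.axioms(1)[OF C]])
qed

lemma pw_mono: "X \<subseteq> Y \<Longrightarrow> ideal_pow R X n \<subseteq> ideal_pow R Y n"
  by (induct n) (simp_all add: pwS prod_mono)

lemma pw_add: assumes "ideal X R"
  shows "ideal_pow R X (a + b) = ideal_pow R X a \<cdot> ideal_pow R X b"
proof (induct a)
  case 0
  then show ?case
    using ideal_prod_one[OF pw_ideal[OF assms, of b]] ideal_prod_commute[OF oneideal pw_ideal[OF assms, of b]]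
    by simp
next
  case (Suc a)
  then show ?case
    by (simp add: pwS ideal_prod_assoc assms pw_ideal)
qed

lemma pw_mult: assumes "ideal X R"
  shows "ideal_pow R (ideal_pow R X a) b = ideal_pow R X (a * b)"
  by (induct b) (simp_all add: pwS pw_add[OF assms])

lemma prod_AC: assumes "ideal A R" "ideal B R" "ideal C R" "ideal D R"
  shows "(A \<cdot> B) \<cdot> (C \<cdot> D) = (A \<cdot> C) \<cdot> (B \<cdot> D)"
proof -
  have "(A \<cdot> B) \<cdot> (C \<cdot> D) = A \<cdot> (B \<cdot> (C \<cdot> D))" using assms by (simp add: ideal_prod_assoc ideal_prod_is_ideal)
  also have "B \<cdot> (C \<cdot> D) = C \<cdot> (B \<cdot> D)"
    using assms by (metis ideal_prod_assoc ideal_prod_commute)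
  finally show ?thesis using assms by (simp add: ideal_prod_assoc ideal_prod_is_ideal)
qed

lemma pw_prod: assumes "ideal X R" "ideal Y R"
  shows "ideal_pow R (X \<cdot> Y) n = ideal_pow R X n \<cdot> ideal_pow R Y n"
proof (induct n)
  case 0
  then show ?case using ideal_prod_one[OF oneideal] by simp
next
  case (Suc n)
  then show ?case using assms by (simp add: pwS prod_AC pw_ideal)
qed

lemma Idl_ideal: "ideal X R \<Longrightarrow> Idl X = X"
  by (meson genideal_minimal genideal_self ideal.axioms(1) additive_subgroup.a_subset subset_antisym order_refl)

lemma Idl_single_prod: assumes "x \<in> carrier R" "y \<in> carrier R"
  shows "(Idl {x}) \<cdot> (Idl {y}) = Idl {x \<otimes> y}"
proof -
  have "(Idl {x}) \<cdot> (Idl {y}) = Idl (PIdl x <#> PIdl y)"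
    using assms by (simp add: ideal_prod_eq_genideal genideal_ideal cgenideal_eq_genideal[symmetric] cgenideal_ideal)
  also have "\<dots> = Idl (PIdl (x \<otimes> y))"
    using assms by (simp add: cgenideal_prod)
  also have "\<dots> = Idl {x \<otimes> y}"
    using assms by (simp add: Idl_ideal genideal_ideal cgenideal_eq_genideal)
  finally show ?thesis .
qed

lemma pw_single: assumes "x \<in> carrier R"
  shows "ideal_pow R (Idl {x}) n = Idl {x [^] n}"
proof (induct n)
  case 0
  then show ?case by (simp add: genideal_one)
next
  case (Suc n)
  then show ?case using assms by (simp add: pwS Idl_single_prod m_comm)
qed


lemma colon_ideal:
  assumes C: "ideal C R" and X: "X \<subseteq> carrier R"
  shows "ideal {u \<in> carrier R. \<forall>x\<in>X. x \<otimes> u \<in> C} R"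
proof -
  have as: "additive_subgroup C R" using C ideal.axioms(1) by blast
  show ?thesis
  proof (rule idealI)
    show "ring R" by (rule ring_axioms)
    show "subgroup {u \<in> carrier R. \<forall>x\<in>X. x \<otimes> u \<in> C} (add_monoid R)"
    proof (rule subgroup.intro)
      show "{u \<in> carrier R. \<forall>x\<in>X. x \<otimes> u \<in> C} \<subseteq> carrier (add_monoid R)" by auto
      show "\<And>u v. u \<in> {u \<in> carrier R. \<forall>x\<in>X. x \<otimes> u \<in> C} \<Longrightarrow>
          v \<in> {u \<in> carrier R. \<forall>x\<in>X. x \<otimes> u \<in> C} \<Longrightarrow>
          u \<otimes>\<^bsub>add_monoid R\<^esub> v \<in> {u \<in> carrier R. \<forall>x\<in>X. x \<otimes> u \<in> C}"
        using X by (auto simp: r_distr additive_subgroup.a_closed[OF as] subset_iff)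
      show "\<one>\<^bsub>add_monoid R\<^esub> \<in> {u \<in> carrier R. \<forall>x\<in>X. x \<otimes> u \<in> C}"
        using X by (auto simp: additive_subgroup.zero_closed[OF as] subset_iff)
      show "\<And>u. u \<in> {u \<in> carrier R. \<forall>x\<in>X. x \<otimes> u \<in> C} \<Longrightarrow>
          inv\<^bsub>add_monoid R\<^esub> u \<in> {u \<in> carrier R. \<forall>x\<in>X. x \<otimes> u \<in> C}"
        using X by (auto simp: a_inv_def[symmetric] r_minus additive_subgroup.a_inv_closed[OF as] subset_iff)
    qed
    show "\<And>a x. a \<in> {u \<in> carrier R. \<forall>x\<in>X. x \<otimes> u \<in> C} \<Longrightarrow> x \<in> carrier R \<Longrightarrow>
        x \<otimes> a \<in> {u \<in> carrier R. \<forall>x\<in>X. x \<otimes> u \<in> C}"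
      using X C by (auto simp: m_lcomm subset_iff ideal.I_l_closed)
    show "\<And>a x. a \<in> {u \<in> carrier R. \<forall>x\<in>X. x \<otimes> u \<in> C} \<Longrightarrow> x \<in> carrier R \<Longrightarrow>
        a \<otimes> x \<in> {u \<in> carrier R. \<forall>x\<in>X. x \<otimes> u \<in> C}"
      using X C by (auto simp: m_assoc[symmetric] subset_iff ideal.I_r_closed)
  qed
qed

lemma Idl_carr: "S \<subseteq> carrier R \<Longrightarrow> Idl S \<subseteq> carrier R"
  using genideal_ideal ideal.axioms(1) additive_subgroup.a_subset by blast

lemma pw_carr: "ideal X R \<Longrightarrow> ideal_pow R X n \<subseteq> carrier R"
  using pw_ideal ideal.axioms(1) additive_subgroup.a_subset by blast

lemma binom:
  assumes S: "S \<subseteq> carrier R" and T: "T \<subseteq> carrier R"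
  shows "ideal C R \<Longrightarrow> (\<And>i. i \<le> k \<Longrightarrow> ideal_pow R (Idl S) i \<cdot> ideal_pow R (Idl T) (k - i) \<subseteq> C)
     \<Longrightarrow> ideal_pow R (Idl (S \<union> T)) k \<subseteq> C"
proof (induct k arbitrary: C)
  case 0
  then show ?case using 0(2)[of 0] ideal_prod_one[OF oneideal] by simp
next
  case (Suc k)
  let ?X = "Idl S" let ?Y = "Idl T" let ?Z = "Idl (S \<union> T)" let ?W = "ideal_pow R ?Z k"
  have iX: "ideal ?X R" and iY: "ideal ?Y R" and iZ: "ideal ?Z R"
    using S T by (auto intro: genideal_ideal)
  have iW: "ideal ?W R" using iZ pw_ideal by blast
  have Wc: "?W \<subseteq> carrier R" using pw_carr iZ by blast
  have Xc: "?X \<subseteq> carrier R" "?Y \<subseteq> carrier R" using S T Idl_carr by auto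
  have W1: "?W \<subseteq> {u \<in> carrier R. \<forall>x\<in>?X. x \<otimes> u \<in> C}"
  proof (rule Suc(1))
    show "ideal {u \<in> carrier R. \<forall>x\<in>?X. x \<otimes> u \<in> C} R" using colon_ideal Suc(2) Xc by blast
    fix i assume i: "i \<le> k"
    have "?X \<cdot> (ideal_pow R ?X i \<cdot> ideal_pow R ?Y (k - i)) = ideal_pow R ?X (Suc i) \<cdot> ideal_pow R ?Y (Suc k - Suc i)"
      using iX iY by (simp add: pwS ideal_prod_assoc pw_ideal)
    also have "\<dots> \<subseteq> C" using Suc(3)[of "Suc i"] i by simp
    finally have h: "?X \<cdot> (ideal_pow R ?X i \<cdot> ideal_pow R ?Y (k - i)) \<subseteq> C" .
    show "ideal_pow R ?X i \<cdot> ideal_pow R ?Y (k - i) \<subseteq> {u \<in> carrier R. \<forall>x\<in>?X. x \<otimes> u \<in> C}"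
      using h ideal_prod_in_carrier[OF pw_ideal[OF iX] pw_ideal[OF iY]] by (auto intro: ideal_prod.prod)
  qed
  have W2: "?W \<subseteq> {u \<in> carrier R. \<forall>x\<in>?Y. x \<otimes> u \<in> C}"
  proof (rule Suc(1))
    show "ideal {u \<in> carrier R. \<forall>x\<in>?Y. x \<otimes> u \<in> C} R" using colon_ideal Suc(2) Xc by blast
    fix i assume i: "i \<le> k"
    have e: "Suc k - i = Suc (k - i)" using i by simp
    have "?Y \<cdot> (ideal_pow R ?X i \<cdot> ideal_pow R ?Y (k - i)) = ideal_pow R ?X i \<cdot> ideal_pow R ?Y (Suc k - i)"
      unfolding e pwS using iX iY
      by (metis ideal_prod_assoc ideal_prod_commute pw_ideal)
    also have "\<dots> \<subseteq> C" using Suc(3) i by simp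
    finally have h: "?Y \<cdot> (ideal_pow R ?X i \<cdot> ideal_pow R ?Y (k - i)) \<subseteq> C" .
    show "ideal_pow R ?X i \<cdot> ideal_pow R ?Y (k - i) \<subseteq> {u \<in> carrier R. \<forall>x\<in>?Y. x \<otimes> u \<in> C}"
      using h ideal_prod_in_carrier[OF pw_ideal[OF iX] pw_ideal[OF iY]] by (auto intro: ideal_prod.prod)
  qed
  have Z: "?Z \<subseteq> {u \<in> carrier R. \<forall>w\<in>?W. w \<otimes> u \<in> C}"
  proof (rule genideal_minimal)
    show "ideal {u \<in> carrier R. \<forall>w\<in>?W. w \<otimes> u \<in> C} R" using colon_ideal Suc(2) Wc by blast
    show "S \<union> T \<subseteq> {u \<in> carrier R. \<forall>w\<in>?W. w \<otimes> u \<in> C}"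
    proof
      fix s assume s: "s \<in> S \<union> T"
      have sc: "s \<in> carrier R" using s S T by auto
      show "s \<in> {u \<in> carrier R. \<forall>w\<in>?W. w \<otimes> u \<in> C}"
      proof (cases "s \<in> S")
        case True
        hence "s \<in> ?X" using genideal_self S by blast
        then show ?thesis using W1 sc Wc by (auto simp: subset_iff) (metis m_comm)
      next
        case False
        hence "s \<in> ?Y" using s genideal_self T by blast
        then show ?thesis using W2 sc Wc by (auto simp: subset_iff) (metis m_comm)
      qed
    qed
  qed
  show ?case unfolding pwS
    by (rule prod_subset[OF Suc(2)]) (use Z Wc in \<open>auto simp: m_comm subset_iff\<close>)
qed

lemma pw_le_B: assumes "ideal X R" "ideal Y R" "ideal B R" "X \<subseteq> B" "Y \<subseteq> B"
  shows "ideal_pow R X a \<cdot> ideal_pow R Y b \<subseteq> ideal_pow R B (a + b)"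
  using prod_mono[OF pw_mono[OF assms(4)] pw_mono[OF assms(5)]] pw_add[OF assms(3)] by simp

lemma bd_union:
  assumes A: "ideal A R" and B: "ideal B R" and S: "S \<subseteq> carrier R" and T: "T \<subseteq> carrier R"
    and SB: "Idl S \<subseteq> B" and TB: "Idl T \<subseteq> B"
    and hS: "ideal_pow R (Idl S) (Suc m) \<subseteq> A \<cdot> ideal_pow R B m"
    and hT: "ideal_pow R (Idl T) (Suc n) \<subseteq> A \<cdot> ideal_pow R B n"
  shows "ideal_pow R (Idl (S \<union> T)) (Suc (m + n)) \<subseteq> A \<cdot> ideal_pow R B (m + n)"
proof (rule binom[OF S T])
  let ?X = "Idl S" let ?Y = "Idl T"
  have iX: "ideal ?X R" and iY: "ideal ?Y R"
    using S T by (auto intro: genideal_ideal)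
  note ids = iX iY A B pw_ideal[OF iX] pw_ideal[OF iY] pw_ideal[OF B]
  show "ideal (A \<cdot> ideal_pow R B (m + n)) R" using ids by (simp add: ideal_prod_is_ideal)
  fix i assume i: "i \<le> Suc (m + n)"
  show "ideal_pow R ?X i \<cdot> ideal_pow R ?Y (Suc (m + n) - i) \<subseteq> A \<cdot> ideal_pow R B (m + n)"
  proof (cases "Suc m \<le> i")
    case True
    define d where "d = i - Suc m"
    have i': "i = Suc m + d" and e: "Suc (m + n) - i = n - d" and dn: "d \<le> n" using True i by (auto simp: d_def)
    have "ideal_pow R ?X i \<cdot> ideal_pow R ?Y (Suc (m + n) - i)
        = ideal_pow R ?X (Suc m) \<cdot> (ideal_pow R ?X d \<cdot> ideal_pow R ?Y (n - d))"
      unfolding i' e using ids by (simp add: pw_add[OF iX] ideal_prod_assoc del: add_Suc)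
    also have "\<dots> \<subseteq> (A \<cdot> ideal_pow R B m) \<cdot> ideal_pow R B (d + (n - d))"
      by (rule prod_mono[OF hS pw_le_B[OF iX iY B SB TB]])
    also have "\<dots> = A \<cdot> ideal_pow R B (m + n)"
      using dn ids by (simp add: ideal_prod_assoc pw_add[OF B])
    finally show ?thesis .
  next
    case False
    define d where "d = m - i"
    have e: "Suc (m + n) - i = Suc n + d" and dn: "i + d = m" using False i by (auto simp: d_def)
    have "ideal_pow R ?X i \<cdot> ideal_pow R ?Y (Suc (m + n) - i)
        = ideal_pow R ?Y (Suc n) \<cdot> (ideal_pow R ?X i \<cdot> ideal_pow R ?Y d)"
    proof -
      have "ideal_pow R ?Y (Suc n + d) = ideal_pow R ?Y (Suc n) \<cdot> ideal_pow R ?Y d" by (rule pw_add[OF iY])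
      hence "ideal_pow R ?X i \<cdot> ideal_pow R ?Y (Suc n + d) = (ideal_pow R ?X i \<cdot> ideal_pow R ?Y (Suc n)) \<cdot> ideal_pow R ?Y d"
        using ids by (simp add: ideal_prod_assoc del: add_Suc)
      also have "\<dots> = (ideal_pow R ?Y (Suc n) \<cdot> ideal_pow R ?X i) \<cdot> ideal_pow R ?Y d"
        using ideal_prod_commute[OF pw_ideal[OF iX] pw_ideal[OF iY]] by simp
      finally show ?thesis unfolding e using ids by (simp add: ideal_prod_assoc del: add_Suc)
    qed
    also have "\<dots> \<subseteq> (A \<cdot> ideal_pow R B n) \<cdot> ideal_pow R B (i + d)"
      by (rule prod_mono[OF hT pw_le_B[OF iX iY B SB TB]])
    also have "\<dots> = A \<cdot> ideal_pow R B (m + n)"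
      using dn ids by (simp add: ideal_prod_assoc pw_add[OF B, symmetric] add.commute)
    finally show ?thesis .
  qed
qed

lemma bd_mono: "Idl S \<subseteq> Idl T \<Longrightarrow> ideal_pow R (Idl T) (Suc n) \<subseteq> C \<Longrightarrow> ideal_pow R (Idl S) (Suc n) \<subseteq> C"
  using pw_mono by blast

lemma bd_bump:
  assumes A: "ideal A R" and B: "ideal B R" and X: "ideal X R" and XB: "X \<subseteq> B"
    and h: "ideal_pow R X (Suc n) \<subseteq> A \<cdot> ideal_pow R B n"
  shows "ideal_pow R X (Suc (Suc n)) \<subseteq> A \<cdot> ideal_pow R B (Suc n)"
proof -
  have "ideal_pow R X (Suc (Suc n)) \<subseteq> B \<cdot> (A \<cdot> ideal_pow R B n)"
    unfolding pwS[of X "Suc n"] by (rule prod_mono[OF XB h])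
  also have "\<dots> = A \<cdot> ideal_pow R B (Suc n)"
    using A B pw_ideal[OF B] ideal_prod_assoc[OF B A pw_ideal[OF B], symmetric]
      ideal_prod_commute[OF A B] ideal_prod_assoc[OF A B pw_ideal[OF B]]
    by (simp add: pwS)
  finally show ?thesis .
qed

lemma Idl_empty: "Idl {} = {\<zero>}"
proof
  show "Idl {} \<subseteq> {\<zero>}" by (rule genideal_minimal[OF zeroideal]) simp
  have "ideal (Idl {}) R" by (rule genideal_ideal) simp
  thus "{\<zero>} \<subseteq> Idl {}" by (simp add: additive_subgroup.zero_closed ideal.axioms(1))
qed

lemma bd_UN:
  assumes A: "ideal A R" and B: "ideal B R" and F: "finite F"
    and h: "\<And>S. S \<in> F \<Longrightarrow> S \<subseteq> carrier R \<and> Idl S \<subseteq> B \<and> (\<exists>n. ideal_pow R (Idl S) (Suc n) \<subseteq> A \<cdot> ideal_pow R B n)"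
  shows "\<exists>n. ideal_pow R (Idl (\<Union>F)) (Suc n) \<subseteq> A \<cdot> ideal_pow R B n"
  using F h
proof (induct F rule: finite_induct)
  case empty
  have e: "ideal_pow R (Idl {}) (Suc 0) = {\<zero>} \<cdot> carrier R"
    unfolding pwS pw0 Idl_empty ..
  have "{\<zero>} \<cdot> carrier R = {\<zero>}"
    using ideal_prod_commute[OF zeroideal oneideal] ideal_prod_zero[OF oneideal] by simp
  hence "ideal_pow R (Idl {}) (Suc 0) = {\<zero>}" using e by simp
  moreover have "A \<cdot> ideal_pow R B 0 = A" using ideal_prod_one[OF A] by simp
  moreover have "\<zero> \<in> A"
    using A by (simp add: additive_subgroup.zero_closed ideal.axioms(1))
  ultimately have "ideal_pow R (Idl {}) (Suc 0) \<subseteq> A \<cdot> ideal_pow R B 0" by simp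
  thus ?case by (intro exI[of _ 0]) (simp only: Union_empty)
next
  case (insert S F)
  have UF: "\<Union>F \<subseteq> carrier R" "Idl (\<Union>F) \<subseteq> B"
  proof -
    have "\<And>T. T \<in> F \<Longrightarrow> T \<subseteq> B"
      using insert(4) genideal_self by (meson insertCI subset_trans)
    thus "Idl (\<Union>F) \<subseteq> B" using genideal_minimal[OF B] by blast
    show "\<Union>F \<subseteq> carrier R" using insert(4) by blast
  qed
  obtain n where n: "ideal_pow R (Idl (\<Union>F)) (Suc n) \<subseteq> A \<cdot> ideal_pow R B n" 
  proof -
    have hF: "\<And>T. T \<in> F \<Longrightarrow> T \<subseteq> carrier R \<and> Idl T \<subseteq> B \<and> (\<exists>n. ideal_pow R (Idl T) (Suc n) \<subseteq> A \<cdot> ideal_pow R B n)"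
      using insert(4) by simp
    show ?thesis using insert(3)[OF hF] that by blast
  qed
  obtain m where m: "S \<subseteq> carrier R" "Idl S \<subseteq> B" "ideal_pow R (Idl S) (Suc m) \<subseteq> A \<cdot> ideal_pow R B m"
    using insert(4)[OF insertI1] by blast
  show ?case using bd_union[OF A B m(1) UF(1) m(2) UF(2) m(3) n]
    by (intro exI[of _ "m+n"]) (simp only: Union_insert)
qed


lemma finsum_ideal:
  assumes C: "ideal C R" and T: "finite T" and h: "\<And>t. t \<in> T \<Longrightarrow> f t \<in> C"
  shows "finsum R f T \<in> C"
  using T h
proof (induct T rule: finite_induct)
  case empty
  then show ?case using C by (simp add: additive_subgroup.zero_closed ideal.axioms(1))
next
  case (insert x F)
  have fc: "f \<in> F \<rightarrow> carrier R" "f x \<in> carrier R"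
    using insert(4) ideal.Icarr[OF C] by auto
  show ?case using insert fc finsum_insert[OF insert(1) insert(2) fc]
    by (simp add: additive_subgroup.a_closed[OF ideal.axioms(1)[OF C]])
qed

lemma pw1: "ideal X R \<Longrightarrow> ideal_pow R X 1 = X"
  by (simp add: pwS ideal_prod_one)

lemma pw2: "ideal X R \<Longrightarrow> ideal_pow R X 2 = X \<cdot> X"
  by (simp add: numeral_2_eq_2 pwS ideal_prod_one)

lemma pair_lemma:
  assumes K: "ideal K R" and I: "ideal I R" and Q: "Q \<subseteq> carrier R"
    and hQ: "ideal_pow R (Idl Q) (Suc L) \<subseteq> K \<cdot> ideal_pow R I L"
    and x: "x \<in> carrier R"
    and hx: "x [^] (Suc m) \<in> (Idl Q) \<cdot> ideal_pow R I (2 * Suc m - 1)"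
  shows "\<exists>n. ideal_pow R (Idl {x}) (Suc n) \<subseteq> (K \<cdot> I) \<cdot> ideal_pow R (ideal_pow R I 2) n"
proof -
  let ?n = "m + m * L + L"
  have iQ: "ideal (Idl Q) R" using Q genideal_ideal by blast
  have ix: "ideal (Idl {x}) R" using x genideal_ideal by blast
  have iP: "ideal (ideal_pow R I (2 * Suc m - 1)) R" using pw_ideal[OF I] .
  have "ideal_pow R (Idl {x}) (Suc ?n) = ideal_pow R (ideal_pow R (Idl {x}) (Suc m)) (Suc L)"
    using pw_mult[OF ix, of "Suc m" "Suc L"] by (simp add: algebra_simps)
  also have "\<dots> = ideal_pow R (Idl {x [^] (Suc m)}) (Suc L)"
    using pw_single[OF x] by simp
  also have "\<dots> \<subseteq> ideal_pow R ((Idl Q) \<cdot> ideal_pow R I (2 * Suc m - 1)) (Suc L)"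
  proof -
    have "Idl {x [^] (Suc m)} \<subseteq> (Idl Q) \<cdot> ideal_pow R I (2 * Suc m - 1)"
      using genideal_minimal[OF ideal_prod_is_ideal[OF iQ iP]] hx by simp
    thus ?thesis by (rule pw_mono)
  qed
  also have "\<dots> = ideal_pow R (Idl Q) (Suc L) \<cdot> ideal_pow R I ((2 * Suc m - 1) * Suc L)"
    using pw_prod[OF iQ iP] pw_mult[OF I] by (simp add: algebra_simps)
  also have "\<dots> \<subseteq> (K \<cdot> ideal_pow R I L) \<cdot> ideal_pow R I ((2 * Suc m - 1) * Suc L)"
    by (rule prod_mono[OF hQ order_refl])
  also have "\<dots> = K \<cdot> ideal_pow R I (L + (2 * Suc m - 1) * Suc L)"
    using K pw_ideal[OF I] pw_add[OF I, of L "(2 * Suc m - 1) * Suc L", symmetric]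
    by (simp only: ideal_prod_assoc)
  also have "L + (2 * Suc m - 1) * Suc L = Suc (2 * ?n)" by (simp add: algebra_simps)
  also have "K \<cdot> ideal_pow R I (Suc (2 * ?n)) = (K \<cdot> I) \<cdot> ideal_pow R (ideal_pow R I 2) ?n"
    using K I pw_ideal[OF I] by (simp add: pwS ideal_prod_assoc pw_mult[OF I])
  finally show ?thesis by blast
qed

lemma step_a:
  assumes K: "ideal K R" and I: "ideal I R" and KI: "K \<subseteq> I" and a: "a \<in> I" and g: "g \<in> K"
    and T: "finite T" "T \<subseteq> I" and geq: "g = a \<oplus> finsum R (\<lambda>t. t) T"
    and hT: "\<And>t. t \<in> T \<Longrightarrow> \<exists>n. ideal_pow R (Idl {a \<otimes> t}) (Suc n) \<subseteq> (K \<cdot> I) \<cdot> ideal_pow R (ideal_pow R I 2) n"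
  shows "\<exists>n. ideal_pow R (Idl {a}) (Suc n) \<subseteq> K \<cdot> ideal_pow R I n"
proof -
  have ac: "a \<in> carrier R" using a ideal.Icarr[OF I] by blast
  have gc: "g \<in> carrier R" using g ideal.Icarr[OF K] by blast
  have Tc: "T \<subseteq> carrier R" using T(2) ideal.Icarr[OF I] by blast
  let ?F = "insert {a \<otimes> g} ((\<lambda>t. {a \<otimes> t}) ` T)"
  let ?S = "\<Union>?F"
  have Sc: "?S \<subseteq> carrier R" using ac gc Tc by auto
  have iS: "ideal (Idl ?S) R" using genideal_ideal[OF Sc] .
  have iA: "ideal (K \<cdot> I) R" using ideal_prod_is_ideal[OF K I] .
  have iB: "ideal (ideal_pow R I 2) R" using pw_ideal[OF I] .
  have B2: "ideal_pow R I 2 = I \<cdot> I" using pw2[OF I] .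
  have "\<exists>n. ideal_pow R (Idl ?S) (Suc n) \<subseteq> (K \<cdot> I) \<cdot> ideal_pow R (ideal_pow R I 2) n"
  proof (rule bd_UN[OF iA iB])
    show "finite ?F" using T by simp
    fix S assume S: "S \<in> ?F"
    show "S \<subseteq> carrier R \<and> Idl S \<subseteq> ideal_pow R I 2 \<and>
      (\<exists>n. ideal_pow R (Idl S) (Suc n) \<subseteq> (K \<cdot> I) \<cdot> ideal_pow R (ideal_pow R I 2) n)"
    proof (cases "S = {a \<otimes> g}")
      case True
      have agc: "a \<otimes> g \<in> carrier R" using ac gc by simp
      have "a \<otimes> g \<in> I \<cdot> I" using a g KI by (auto intro: ideal_prod.prod)
      hence s1: "Idl S \<subseteq> ideal_pow R I 2" using True B2 genideal_minimal[OF iB] by simp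
      have "a \<otimes> g \<in> K \<cdot> I" using ideal_prod.prod[OF g a] m_comm[OF ac gc] by simp
      hence "Idl S \<subseteq> K \<cdot> I" using True genideal_minimal[OF iA] by simp
      hence "ideal_pow R (Idl S) (Suc 0) \<subseteq> (K \<cdot> I) \<cdot> ideal_pow R (ideal_pow R I 2) 0"
        using pw1[OF genideal_ideal, of S] True agc ideal_prod_one[OF iA] by simp
      then show ?thesis using True agc s1 by blast
    next
      case False
      then obtain t where t: "t \<in> T" and St: "S = {a \<otimes> t}" using S by auto
      have tc: "t \<in> carrier R" using t Tc by blast
      have "a \<otimes> t \<in> I \<cdot> I" using a t T(2) by (auto intro: ideal_prod.prod)
      hence "Idl S \<subseteq> ideal_pow R I 2" using St B2 genideal_minimal[OF iB] by simp
      then show ?thesis using St ac tc hT[OF t] by simp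
    qed
  qed
  then obtain n where n: "ideal_pow R (Idl ?S) (Suc n) \<subseteq> (K \<cdot> I) \<cdot> ideal_pow R (ideal_pow R I 2) n" by blast
  have aa: "a \<otimes> a \<in> Idl ?S"
  proof -
    have sc: "finsum R (\<lambda>t. t) T \<in> carrier R" using Tc by (intro finsum_closed) auto
    have fd: "a \<otimes> finsum R (\<lambda>t. t) T = finsum R (\<lambda>t. a \<otimes> t) T"
      using finsum_rdistr[OF T(1) ac, of "\<lambda>t. t"] Tc by auto
    have e1: "a \<otimes> g = a \<otimes> a \<oplus> finsum R (\<lambda>t. a \<otimes> t) T"
      using geq fd ac sc by (simp add: r_distr)
    have s2c: "finsum R (\<lambda>t. a \<otimes> t) T \<in> carrier R" using Tc ac by (intro finsum_closed) auto
    have e2: "a \<otimes> a = a \<otimes> g \<oplus> \<ominus> finsum R (\<lambda>t. a \<otimes> t) T"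
      using e1 s2c ac by (simp add: a_assoc r_neg)
    have m1: "a \<otimes> g \<in> Idl ?S" using genideal_self[OF Sc] by auto
    have m2: "finsum R (\<lambda>t. a \<otimes> t) T \<in> Idl ?S"
      by (rule finsum_ideal[OF iS T(1)]) (use genideal_self[OF Sc] in auto)
    show ?thesis unfolding e2
      using m1 m2 iS by (simp add: additive_subgroup.a_closed additive_subgroup.a_inv_closed ideal.axioms(1))
  qed
  have ia: "ideal (Idl {a}) R" using genideal_ideal ac by simp
  have "ideal_pow R (Idl {a}) (2 * Suc n) = ideal_pow R (Idl {a \<otimes> a}) (Suc n)"
    using pw_mult[OF ia, of 2 "Suc n", symmetric] pw2[OF ia] Idl_single_prod[OF ac ac] by simp
  also have "\<dots> \<subseteq> (K \<cdot> I) \<cdot> ideal_pow R (ideal_pow R I 2) n"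
    by (rule bd_mono[OF _ n], rule genideal_minimal[OF iS]) (use aa in simp)
  also have "\<dots> = K \<cdot> ideal_pow R I (Suc (2 * n))"
    using K I pw_ideal[OF I] by (simp add: pwS ideal_prod_assoc pw_mult[OF I])
  finally have "ideal_pow R (Idl {a}) (Suc (Suc (2 * n))) \<subseteq> K \<cdot> ideal_pow R I (Suc (2 * n))" by simp
  thus ?thesis by blast
qed

end

theorem theorem2p1:
  fixes R (structure) and P :: "'a set" and Ps :: "nat \<Rightarrow> 'a set" and r :: nat
  assumes "cring R" and "noetherian_ring R" and "\<one>\<^bsub>R\<^esub> \<noteq> \<zero>\<^bsub>R\<^esub>"
    and "finite P" and "P \<subseteq> carrier R"
    and "\<And>l. l \<le> r \<Longrightarrow> Ps l \<subseteq> P"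
    and B1: "P = (\<Union>l\<in>{0..r}. Ps l)"
    and B2: "card (Ps 0) = 1"
    and B3: "\<And>l a a''. 0 < l \<Longrightarrow> l \<le> r \<Longrightarrow> a \<in> Ps l \<Longrightarrow> a'' \<in> Ps l \<Longrightarrow> a \<noteq> a'' \<Longrightarrow>
               \<exists>m::nat. m \<ge> 1 \<and>
                 (a \<otimes>\<^bsub>R\<^esub> a'') [^]\<^bsub>R\<^esub> m \<in>
                   ideal_prod R (Idl\<^bsub>R\<^esub> (\<Union>k\<in>{0..<l}. Ps k)) (ideal_pow R (Idl\<^bsub>R\<^esub> P) (2 * m - 1))"
  shows "is_reduction R (Idl\<^bsub>R\<^esub> ((\<lambda>l. finsum R (\<lambda>a. a) (Ps l)) ` {0..r})) (Idl\<^bsub>R\<^esub> P)"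
proof -
  interpret cring R by fact
  have Pc: "P \<subseteq> carrier R" by fact
  have PsP: "\<And>l. l \<le> r \<Longrightarrow> Ps l \<subseteq> P" by fact
  define I where "I = Idl P"
  have iI: "ideal I R" unfolding I_def using genideal_ideal[OF Pc] .
  have PI: "P \<subseteq> I" unfolding I_def using genideal_self[OF Pc] .
  have Ic: "I \<subseteq> carrier R" using iI ideal.Icarr by (meson subsetI)
  define g where "g = (\<lambda>l. finsum R (\<lambda>a. a) (Ps l))"
  define Qs where "Qs = (\<lambda>l. \<Union>k\<in>{0..<l}. Ps k)"
  define Gs where "Gs = (\<lambda>l. g ` {0..<l})"
  have PsI: "\<And>l. l \<le> r \<Longrightarrow> Ps l \<subseteq> I" using PsP PI by (meson subset_trans)
  have Psf: "\<And>l. l \<le> r \<Longrightarrow> finite (Ps l)" using PsP \<open>finite P\<close> by (meson finite_subset)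
  have gI: "\<And>l. l \<le> r \<Longrightarrow> g l \<in> I"
    unfolding g_def by (rule finsum_ideal[OF iI Psf]) (use PsI in auto)
  have GsI: "\<And>l. l \<le> Suc r \<Longrightarrow> Gs l \<subseteq> I" unfolding Gs_def using gI by auto
  have Gsc: "\<And>l. l \<le> Suc r \<Longrightarrow> Gs l \<subseteq> carrier R" using GsI Ic by (meson subset_trans)
  have QsP: "Qs l \<subseteq> P" if l: "l \<le> Suc r" for l
  proof -
    have "\<And>k. k < l \<Longrightarrow> Ps k \<subseteq> P" using l PsP by simp
    thus ?thesis unfolding Qs_def by (intro UN_least) simp
  qed
  have Qsc: "\<And>l. l \<le> Suc r \<Longrightarrow> Qs l \<subseteq> carrier R" using QsP Pc by (meson subset_trans)
  have V: "\<And>l. l \<le> r \<Longrightarrow> \<exists>n. ideal_pow R (Idl (Qs (Suc l))) (Suc n) \<subseteq> (Idl (Gs (Suc l))) \<cdot> ideal_pow R I n"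
  proof -
    fix l show "l \<le> r \<Longrightarrow> \<exists>n. ideal_pow R (Idl (Qs (Suc l))) (Suc n) \<subseteq> (Idl (Gs (Suc l))) \<cdot> ideal_pow R I n"
    proof (induct l)
      case 0
      obtain p where p: "Ps 0 = {p}" using B2 by (auto simp: card_1_singleton_iff)
      have pc: "p \<in> carrier R" using p PsP[of 0] Pc by auto
      have Q1: "Qs (Suc 0) = {p}" unfolding Qs_def using p by simp
      have "g 0 = p" unfolding g_def p using finsum_insert[of "{}" p "\<lambda>a. a"] pc by simp
      hence G1: "Gs (Suc 0) = {p}" unfolding Gs_def by simp
      have ip: "ideal (Idl {p}) R" using genideal_ideal pc by simp
      have "ideal_pow R (Idl (Qs (Suc 0))) (Suc 0) \<subseteq> (Idl (Gs (Suc 0))) \<cdot> ideal_pow R I 0"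
        unfolding Q1 G1 using pw1[OF ip] ideal_prod_one[OF ip] by simp
      then show ?case by blast
    next
      case (Suc l)
      let ?l = "Suc l"
      have lr: "?l \<le> r" by fact
      obtain L where L: "ideal_pow R (Idl (Qs ?l)) (Suc L) \<subseteq> (Idl (Gs ?l)) \<cdot> ideal_pow R I L"
        using Suc.hyps[OF Suc_leD[OF Suc.prems]] by blast
      let ?K = "Idl (Gs (Suc ?l))"
      have iK: "ideal ?K R" using genideal_ideal Gsc lr by simp
      have KI: "?K \<subseteq> I" using genideal_minimal[OF iI] GsI lr by simp
      have K0: "Idl (Gs ?l) \<subseteq> ?K"
        by (rule genideal_minimal[OF iK]) (use genideal_self[OF Gsc[of "Suc ?l"]] lr in \<open>auto simp: Gs_def\<close>)
      have hQ: "ideal_pow R (Idl (Qs ?l)) (Suc L) \<subseteq> ?K \<cdot> ideal_pow R I L"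
        using L prod_mono[OF K0 order_refl] by blast
      have gK: "g ?l \<in> ?K" using genideal_self[OF Gsc[of "Suc ?l"]] lr by (auto simp: Gs_def)
      have QsS: "Qs (Suc ?l) = \<Union>(insert (Qs ?l) ((\<lambda>a. {a}) ` Ps ?l))"
        unfolding Qs_def by (auto simp: less_Suc_eq)
      have "\<exists>n. ideal_pow R (Idl (\<Union>(insert (Qs ?l) ((\<lambda>a. {a}) ` Ps ?l)))) (Suc n) \<subseteq> ?K \<cdot> ideal_pow R I n"
      proof (rule bd_UN[OF iK iI])
        show "finite (insert (Qs ?l) ((\<lambda>a. {a}) ` Ps ?l))" using Psf lr by simp
        fix S assume S: "S \<in> insert (Qs ?l) ((\<lambda>a. {a}) ` Ps ?l)"
        show "S \<subseteq> carrier R \<and> Idl S \<subseteq> I \<and> (\<exists>n. ideal_pow R (Idl S) (Suc n) \<subseteq> ?K \<cdot> ideal_pow R I n)"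
        proof (cases "S = Qs ?l")
          case True
          have "Idl S \<subseteq> I" using True genideal_minimal[OF iI] QsP[of ?l] PI lr by auto
          then show ?thesis using True Qsc[of ?l] lr hQ by auto
        next
          case False
          then obtain a where a: "a \<in> Ps ?l" and Sa: "S = {a}" using S by auto
          have aI: "a \<in> I" using a PsI lr by blast
          have ac: "a \<in> carrier R" using aI Ic by blast
          have SI: "Idl S \<subseteq> I" using Sa genideal_minimal[OF iI] aI by simp
          define T where "T = Ps ?l - {a}"
          have Tf: "finite T" unfolding T_def using Psf lr by simp
          have TI: "T \<subseteq> I" unfolding T_def using PsI lr by blast
          have Tc: "T \<subseteq> carrier R" using TI Ic by blast
          have PsT: "Ps ?l = insert a T" "a \<notin> T" unfolding T_def using a by auto
          have geq: "g ?l = a \<oplus> finsum R (\<lambda>t. t) T"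
            unfolding g_def PsT(1) using finsum_insert[OF Tf PsT(2), of "\<lambda>t. t"] Tc ac by auto
          have hT: "\<exists>n. ideal_pow R (Idl {a \<otimes> t}) (Suc n) \<subseteq> (?K \<cdot> I) \<cdot> ideal_pow R (ideal_pow R I 2) n"
            if t: "t \<in> T" for t
          proof -
            have tP: "t \<in> Ps ?l" "a \<noteq> t" using t unfolding T_def by auto
            have ex: "\<exists>m::nat. m \<ge> 1 \<and> (a \<otimes> t) [^] m \<in> (Idl (Qs ?l)) \<cdot> ideal_pow R I (2 * m - 1)"
              using B3[OF zero_less_Suc lr a tP(1) tP(2)] by (simp add: Qs_def I_def)
            then obtain m where m: "m \<ge> 1" "(a \<otimes> t) [^] m \<in> (Idl (Qs ?l)) \<cdot> ideal_pow R I (2 * m - 1)"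
              by blast
            obtain m' where m': "m = Suc m'" using m(1) by (cases m) auto
            have hx: "(a \<otimes> t) [^] (Suc m') \<in> (Idl (Qs ?l)) \<cdot> ideal_pow R I (2 * Suc m' - 1)"
              using m(2) m' by simp
            have atc: "a \<otimes> t \<in> carrier R" using ac t Tc by auto
            show ?thesis by (rule pair_lemma[OF iK iI Qsc[of ?l] hQ atc hx]) (use lr in simp)
          qed
          have "\<exists>n. ideal_pow R (Idl {a}) (Suc n) \<subseteq> ?K \<cdot> ideal_pow R I n"
            by (rule step_a[OF iK iI KI aI gK Tf TI geq hT])
          then show ?thesis using Sa ac SI by simp
        qed
      qed
      then show ?case using QsS by simp
    qed
  qed
  have QP: "Qs (Suc r) = P" unfolding Qs_def B1 by (simp add: atLeastLessThanSuc_atLeastAtMost)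
  have GJ: "Gs (Suc r) = (\<lambda>l. finsum R (\<lambda>a. a) (Ps l)) ` {0..r}"
    unfolding Gs_def g_def by (simp add: atLeastLessThanSuc_atLeastAtMost)
  let ?J = "Idl (Gs (Suc r))"
  have iJ: "ideal ?J R" using genideal_ideal Gsc[of "Suc r"] by simp
  have JI: "?J \<subseteq> I" using genideal_minimal[OF iI] GsI[of "Suc r"] by simp
  obtain n where n: "ideal_pow R (Idl (Qs (Suc r))) (Suc n) \<subseteq> ?J \<cdot> ideal_pow R I n"
    using V[of r] by auto
  have IdlP: "Idl P = I" unfolding I_def ..
  have n': "ideal_pow R I (Suc n) \<subseteq> ?J \<cdot> ideal_pow R I n" using n unfolding QP IdlP .
  have h1: "ideal_pow R I (Suc (Suc n)) \<subseteq> ?J \<cdot> ideal_pow R I (Suc n)"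
    by (rule bd_bump[OF iJ iI iI order_refl n'])
  have h2: "?J \<cdot> ideal_pow R I (Suc n) \<subseteq> ideal_pow R I (Suc (Suc n))"
    unfolding pwS[of I "Suc n"] by (rule prod_mono[OF JI order_refl])
  have "is_reduction R ?J I"
    unfolding is_reduction_def using iJ JI h1 h2
    by (intro conjI exI[of _ "Suc n"]) auto
  thus ?thesis unfolding GJ I_def .
qed

end
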